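(* The following problem (\textsc{MSO/DMS-MC}) is undecidable: given a database-manipulating system (DMS) $\mathcal{S}$ and an MSO-FO sentence $\phi$ over the schema of $\mathcal{S}$, decide whether $\rho \models \phi$ for every run $\rho \in \textsf{Runs}(\mathcal{S})$.
   Context: Fix a countably infinite data domain $\Delta$. A relational schema $\mathcal{R}$ is a finite set of relation names $R/a$ with arities $a\ge 0$. A database instance over $\mathcal{R}$ and a set $D$ is a finite set of facts $R(e_1,\dots,e_a)$ with $R/a\in\mathcal{R}$ and $e_i\in D$; a nullary relation $p/0$ is "true" in $I$ iff $p\in I$. The active domain $\mathrm{adom}(I)$ is the set of elements of $\Delta$ occurring in facts of $I$. A $\mathrm{FOL}(\mathcal{R})$ query is a first-order formula with equality over $\mathcal{R}$ (atoms $\mathsf{true}$, $R(u_1,\dots,u_a)$, $u_1=u_2$; connectives $\neg,\wedge$; quantifier $\exists u$), evaluated with active-domain semantics: $\exists u$ ranges over $\mathrm{adom}(I)$; $I,\sigma\models Q$ denotes satisfaction under a substitution $\sigma$ of the free variables. For an instance $I$ whose arguments are variables and a substitution $\sigma$ of these variables into $\Delta$, $\sigma(I)$ denotes the instance obtained by replacing each variable $u$ by $\sigma(u)$. A DMS over $\Delta$ and $\mathcal{R}$ is a pair $\mathcal{S}=\langle I_0,\textsc{acts}\rangle$ where $I_0$ is an instance with $\mathrm{adom}(I_0)=\emptyset$ (it only fixes truth values of nullary relations) and $\textsc{acts}$ is a finite set of actions $\alpha=\langle \vec u,\vec v,Q,\mathit{Del},\mathit{Add}\rangle$: $\vec u,\vec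 v$ are disjoint finite sets of data variables (action parameters and fresh-input variables), $Q$ is a $\mathrm{FOL}(\mathcal{R})$ query whose free variables are exactly $\vec u$, $\mathit{Del}$ is an instance over $\mathcal{R}$ with arguments in $\vec u$, and $\mathit{Add}$ is an instance over $\mathcal{R}$ with arguments in $\vec u\cup\vec v$ in which every variable of $\vec v$ occurs. Configurations are pairs $\langle I,H\rangle$ with $I$ an instance over $\mathcal{R},\Delta$ and $H\subseteq\Delta$ (history set). There is a transition $\langle I,H\rangle\xrightarrow{\alpha:\sigma}\langle I',H'\rangle$ iff $\sigma:\vec u\cup\vec v\to\Delta$ satisfies: $\sigma(u)\in\mathrm{adom}(I)$ for $u\in\vec u$; $\sigma(v)\notin H$ for $v\in\vec v$; $\sigma$ is injective on $\vec v$; $I,\sigma|_{\vec u}\models Q$; $I'=(I\setminus\sigma(\mathit{Del}))\cup\sigma(\mathit{Add})$; and $H'=H\cup\{\sigma(v)\mid v\in\vec v\}$. An extended run is an infinite sequence $\langle I_0,H_0\rangle\xrightarrow{\alpha_0:\sigma_0}\langle I_1,H_1\rangle\xrightarrow{\alpha_1:\sigma_1}\cdots$ with $H_0=\emptyset$; the run it generates is $I_0,I_1,I_2,\dots$; $\textsf{Runs}(\mathcal{S})$ is the set of all runs. MSO-FO formulae over $\mathcal{R}$: $\phi ::= Q@x \mid x<y \mid x\in X \mid \neg\phi \mid \phi\wedge\phi \mid \exists x.\phi \mid \exists X.\phi \mid \exists^g u.\phi$, where $x,y$ are first-order position variables (ranging over $\mathbb{N}$), $X$ is a second-order position variable (ranging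 over subsets of $\mathbb{N}$), $u$ is a data variable and $Q$ is a $\mathrm{FOL}(\mathcal{R})$ query. Over a run $\rho=I_0,I_1,\dots$ with $\mathrm{gadom}(\rho)=\bigcup_i\mathrm{adom}(I_i)$: $\rho,\sigma\models Q@x$ iff, with $i=\sigma(x)$, the values $\sigma$ assigns to the free variables of $Q$ lie in $\mathrm{adom}(I_i)$ and $I_i,\sigma|_{\mathrm{free}(Q)}\models Q$; $x<y$ and $x\in X$ are interpreted naturally on $\mathbb{N}$; $\exists^g u.\phi$ holds iff there is $e\in\mathrm{gadom}(\rho)$ with $\phi$ holding when $u\mapsto e$; the remaining cases are standard. A sentence has no free variables. *)

theory Defs
  imports Main "HOL-Library.Nat_Bijection"
begin

datatype recf = RZ | RS | RId nat | RCn recf "recf list" | RPr recf recf | RMn recf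

inductive rf_eval :: "recf \<Rightarrow> nat list \<Rightarrow> nat \<Rightarrow> bool" where
  zero: "rf_eval RZ xs 0"
| succ: "rf_eval RS (x # xs) (Suc x)"
| proj: "i < length xs \<Longrightarrow> rf_eval (RId i) xs (xs ! i)"
| comp: "list_all2 (\<lambda>g y. rf_eval g xs y) gs ys \<Longrightarrow> rf_eval f ys y \<Longrightarrow> rf_eval (RCn f gs) xs y"
| pr0: "rf_eval f xs y \<Longrightarrow> rf_eval (RPr f g) (0 # xs) y"
| prS: "rf_eval (RPr f g) (n # xs) z \<Longrightarrow> rf_eval g (z # n # xs) y \<Longrightarrow> rf_eval (RPr f g) (Suc n # xs) y"
| mn: "rf_eval f (n # xs) 0 \<Longrightarrow> (\<forall>m<n. \<exists>y. rf_eval f (m # xs) y \<and> y \<noteq> 0) \<Longrightarrow> rf_eval (RMn f) xs n"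

definition decidable_on :: "('a \<Rightarrow> bool) \<Rightarrow> ('a \<Rightarrow> bool) \<Rightarrow> ('a \<Rightarrow> nat) \<Rightarrow> bool" where
  "decidable_on adm P enc \<longleftrightarrow>
     (\<exists>r. \<forall>x. adm x \<longrightarrow> rf_eval r [enc x] (if P x then 1 else 0))"

type_synonym fact = "nat \<times> nat list"   \<comment> \<open>relation name, arguments\<close>
type_synonym inst = "fact set"
type_synonym schema = "(nat \<times> nat) list" \<comment> \<open>relation name, arity\<close>

definition adom :: "inst \<Rightarrow> nat set" where
  "adom I = (\<Union>(r, args)\<in>I. set args)"

datatype fol = FTrue | FAtom nat "nat list" | FEq nat nat | FNot fol | FAnd fol fol | FEx nat fol

fun fol_holds :: "inst \<Rightarrow> (nat \<Rightarrow> nat) \<Rightarrow> fol \<Rightarrow> bool" where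
  "fol_holds I \<sigma> FTrue = True"
| "fol_holds I \<sigma> (FAtom r us) = ((r, map \<sigma> us) \<in> I)"
| "fol_holds I \<sigma> (FEq u v) = (\<sigma> u = \<sigma> v)"
| "fol_holds I \<sigma> (FNot q) = (\<not> fol_holds I \<sigma> q)"
| "fol_holds I \<sigma> (FAnd q1 q2) = (fol_holds I \<sigma> q1 \<and> fol_holds I \<sigma> q2)"
| "fol_holds I \<sigma> (FEx u q) = (\<exists>e\<in>adom I. fol_holds I (\<sigma>(u := e)) q)"

fun fol_fv :: "fol \<Rightarrow> nat set" where
  "fol_fv FTrue = {}"
| "fol_fv (FAtom r us) = set us"
| "fol_fv (FEq u v) = {u, v}"
| "fol_fv (FNot q) = fol_fv q"
| "fol_fv (FAnd q1 q2) = fol_fv q1 \<union> fol_fv q2"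
| "fol_fv (FEx u q) = fol_fv q - {u}"

fun fol_over :: "schema \<Rightarrow> fol \<Rightarrow> bool" where
  "fol_over R FTrue = True"
| "fol_over R (FAtom r us) = ((r, length us) \<in> set R)"
| "fol_over R (FEq u v) = True"
| "fol_over R (FNot q) = fol_over R q"
| "fol_over R (FAnd q1 q2) = (fol_over R q1 \<and> fol_over R q2)"
| "fol_over R (FEx u q) = fol_over R q"

datatype action = Action
  (a_params: "nat list") (a_fresh: "nat list") (a_query: fol)
  (a_del: "fact list") (a_add: "fact list")

text \<open>A DMS: schema, the nullary relations true initially (so adom I0 is empty), actions.\<close>
datatype dms = DMS (d_schema: schema) (d_init: "nat list") (d_acts: "action list")

definition fact_over :: "schema \<Rightarrow> fact \<Rightarrow> bool" where
  "fact_over R f \<longleftrightarrow> (fst f, length (snd f)) \<in> set R"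

definition wf_action :: "schema \<Rightarrow> action \<Rightarrow> bool" where
  "wf_action R a \<longleftrightarrow>
     set (a_params a) \<inter> set (a_fresh a) = {} \<and>
     fol_over R (a_query a) \<and> fol_fv (a_query a) = set (a_params a) \<and>
     (\<forall>f\<in>set (a_del a). fact_over R f \<and> set (snd f) \<subseteq> set (a_params a)) \<and>
     (\<forall>f\<in>set (a_add a). fact_over R f \<and> set (snd f) \<subseteq> set (a_params a) \<union> set (a_fresh a)) \<and>
     (\<forall>v\<in>set (a_fresh a). \<exists>f\<in>set (a_add a). v \<in> set (snd f))"

definition wf_dms :: "dms \<Rightarrow> bool" where
  "wf_dms S \<longleftrightarrow> distinct (map fst (d_schema S)) \<and>
     (\<forall>p\<in>set (d_init S). (p, 0) \<in> set (d_schema S)) \<and>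
     (\<forall>a\<in>set (d_acts S). wf_action (d_schema S) a)"

definition init_inst :: "dms \<Rightarrow> inst" where
  "init_inst S = (\<lambda>p. (p, [])) ` set (d_init S)"

definition subst_inst :: "(nat \<Rightarrow> nat) \<Rightarrow> fact list \<Rightarrow> inst" where
  "subst_inst \<sigma> F = (\<lambda>(r, args). (r, map \<sigma> args)) ` set F"

definition dms_step :: "dms \<Rightarrow> inst \<times> nat set \<Rightarrow> inst \<times> nat set \<Rightarrow> bool" where
  "dms_step S c c' \<longleftrightarrow> (\<exists>a\<in>set (d_acts S). \<exists>\<sigma>.
      (\<forall>u\<in>set (a_params a). \<sigma> u \<in> adom (fst c)) \<and>
      (\<forall>v\<in>set (a_fresh a). \<sigma> v \<notin> snd c) \<and>
      inj_on \<sigma> (set (a_fresh a)) \<and>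
      fol_holds (fst c) \<sigma> (a_query a) \<and>
      fst c' = (fst c - subst_inst \<sigma> (a_del a)) \<union> subst_inst \<sigma> (a_add a) \<and>
      snd c' = snd c \<union> \<sigma> ` set (a_fresh a))"

definition is_run :: "dms \<Rightarrow> (nat \<Rightarrow> inst) \<Rightarrow> bool" where
  "is_run S \<rho> \<longleftrightarrow> (\<exists>H. H 0 = {} \<and> \<rho> 0 = init_inst S \<and>
      (\<forall>i. dms_step S (\<rho> i, H i) (\<rho> (Suc i), H (Suc i))))"

text \<open>Position variables, set variables and data variables are each named by nat
  (separate name spaces).\<close>
datatype mso = MQAt fol nat | MLess nat nat | MMem nat nat | MNot mso | MAnd mso mso
  | MExPos nat mso | MExSet nat mso | MExG nat mso

definition gadom :: "(nat \<Rightarrow> inst) \<Rightarrow> nat set" where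
  "gadom \<rho> = (\<Union>i. adom (\<rho> i))"

fun mso_holds :: "(nat \<Rightarrow> inst) \<Rightarrow> (nat \<Rightarrow> nat) \<Rightarrow> (nat \<Rightarrow> nat) \<Rightarrow> (nat \<Rightarrow> nat set) \<Rightarrow> mso \<Rightarrow> bool" where
  "mso_holds \<rho> \<xi> \<pi> \<Pi> (MQAt q x) =
     ((\<forall>u\<in>fol_fv q. \<xi> u \<in> adom (\<rho> (\<pi> x))) \<and> fol_holds (\<rho> (\<pi> x)) \<xi> q)"
| "mso_holds \<rho> \<xi> \<pi> \<Pi> (MLess x y) = (\<pi> x < \<pi> y)"
| "mso_holds \<rho> \<xi> \<pi> \<Pi> (MMem x X) = (\<pi> x \<in> \<Pi> X)"
| "mso_holds \<rho> \<xi> \<pi> \<Pi> (MNot \<phi>) = (\<not> mso_holds \<rho> \<xi> \<pi> \<Pi> \<phi>)"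
| "mso_holds \<rho> \<xi> \<pi> \<Pi> (MAnd \<phi> \<psi>) = (mso_holds \<rho> \<xi> \<pi> \<Pi> \<phi> \<and> mso_holds \<rho> \<xi> \<pi> \<Pi> \<psi>)"
| "mso_holds \<rho> \<xi> \<pi> \<Pi> (MExPos x \<phi>) = (\<exists>i. mso_holds \<rho> \<xi> (\<pi>(x := i)) \<Pi> \<phi>)"
| "mso_holds \<rho> \<xi> \<pi> \<Pi> (MExSet X \<phi>) = (\<exists>A. mso_holds \<rho> \<xi> \<pi> (\<Pi>(X := A)) \<phi>)"
| "mso_holds \<rho> \<xi> \<pi> \<Pi> (MExG u \<phi>) = (\<exists>e\<in>gadom \<rho>. mso_holds \<rho> (\<xi>(u := e)) \<pi> \<Pi> \<phi>)"

fun mso_dfv :: "mso \<Rightarrow> nat set" where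
  "mso_dfv (MQAt q x) = fol_fv q"
| "mso_dfv (MLess x y) = {}"
| "mso_dfv (MMem x X) = {}"
| "mso_dfv (MNot \<phi>) = mso_dfv \<phi>"
| "mso_dfv (MAnd \<phi> \<psi>) = mso_dfv \<phi> \<union> mso_dfv \<psi>"
| "mso_dfv (MExPos x \<phi>) = mso_dfv \<phi>"
| "mso_dfv (MExSet X \<phi>) = mso_dfv \<phi>"
| "mso_dfv (MExG u \<phi>) = mso_dfv \<phi> - {u}"

fun mso_pfv :: "mso \<Rightarrow> nat set" where
  "mso_pfv (MQAt q x) = {x}"
| "mso_pfv (MLess x y) = {x, y}"
| "mso_pfv (MMem x X) = {x}"
| "mso_pfv (MNot \<phi>) = mso_pfv \<phi>"
| "mso_pfv (MAnd \<phi> \<psi>) = mso_pfv \<phi> \<union> mso_pfv \<psi>"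
| "mso_pfv (MExPos x \<phi>) = mso_pfv \<phi> - {x}"
| "mso_pfv (MExSet X \<phi>) = mso_pfv \<phi>"
| "mso_pfv (MExG u \<phi>) = mso_pfv \<phi>"

fun mso_sfv :: "mso \<Rightarrow> nat set" where
  "mso_sfv (MQAt q x) = {}"
| "mso_sfv (MLess x y) = {}"
| "mso_sfv (MMem x X) = {X}"
| "mso_sfv (MNot \<phi>) = mso_sfv \<phi>"
| "mso_sfv (MAnd \<phi> \<psi>) = mso_sfv \<phi> \<union> mso_sfv \<psi>"
| "mso_sfv (MExPos x \<phi>) = mso_sfv \<phi>"
| "mso_sfv (MExSet X \<phi>) = mso_sfv \<phi> - {X}"
| "mso_sfv (MExG u \<phi>) = mso_sfv \<phi>"

definition mso_sentence :: "mso \<Rightarrow> bool" where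
  "mso_sentence \<phi> \<longleftrightarrow> mso_dfv \<phi> = {} \<and> mso_pfv \<phi> = {} \<and> mso_sfv \<phi> = {}"

fun mso_over :: "schema \<Rightarrow> mso \<Rightarrow> bool" where
  "mso_over R (MQAt q x) = fol_over R q"
| "mso_over R (MLess x y) = True"
| "mso_over R (MMem x X) = True"
| "mso_over R (MNot \<phi>) = mso_over R \<phi>"
| "mso_over R (MAnd \<phi> \<psi>) = (mso_over R \<phi> \<and> mso_over R \<psi>)"
| "mso_over R (MExPos x \<phi>) = mso_over R \<phi>"
| "mso_over R (MExSet X \<phi>) = mso_over R \<phi>"
| "mso_over R (MExG u \<phi>) = mso_over R \<phi>"

definition mc_input :: "dms \<times> mso \<Rightarrow> bool" where
  "mc_input x \<longleftrightarrow> wf_dms (fst x) \<and> mso_sentence (snd x) \<and> mso_over (d_schema (fst x)) (snd x)"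

text \<open>Yes-instances: every run satisfies the sentence (valuations irrelevant for sentences).\<close>
definition mc_yes :: "dms \<times> mso \<Rightarrow> bool" where
  "mc_yes x \<longleftrightarrow> (\<forall>\<rho>. is_run (fst x) \<rho> \<longrightarrow> mso_holds \<rho> (\<lambda>_. 0) (\<lambda>_. 0) (\<lambda>_. {}) (snd x))"

fun enc_fol :: "fol \<Rightarrow> nat" where
  "enc_fol FTrue = prod_encode (0, 0)"
| "enc_fol (FAtom r us) = prod_encode (1, prod_encode (r, list_encode us))"
| "enc_fol (FEq u v) = prod_encode (2, prod_encode (u, v))"
| "enc_fol (FNot q) = prod_encode (3, enc_fol q)"
| "enc_fol (FAnd q1 q2) = prod_encode (4, prod_encode (enc_fol q1, enc_fol q2))"
| "enc_fol (FEx u q) = prod_encode (5, prod_encode (u, enc_fol q))"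

definition enc_fact :: "fact \<Rightarrow> nat" where
  "enc_fact f = prod_encode (fst f, list_encode (snd f))"

definition enc_action :: "action \<Rightarrow> nat" where
  "enc_action a = list_encode [list_encode (a_params a), list_encode (a_fresh a),
     enc_fol (a_query a), list_encode (map enc_fact (a_del a)), list_encode (map enc_fact (a_add a))]"

definition enc_dms :: "dms \<Rightarrow> nat" where
  "enc_dms S = list_encode [list_encode (map prod_encode (d_schema S)), list_encode (d_init S),
     list_encode (map enc_action (d_acts S))]"

fun enc_mso :: "mso \<Rightarrow> nat" where
  "enc_mso (MQAt q x) = prod_encode (0, prod_encode (enc_fol q, x))"
| "enc_mso (MLess x y) = prod_encode (1, prod_encode (x, y))"
| "enc_mso (MMem x X) = prod_encode (2, prod_encode (x, X))"
| "enc_mso (MNot \<phi>) = prod_encode (3, enc_mso \<phi>)"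
| "enc_mso (MAnd \<phi> \<psi>) = prod_encode (4, prod_encode (enc_mso \<phi>, enc_mso \<psi>))"
| "enc_mso (MExPos x \<phi>) = prod_encode (5, prod_encode (x, enc_mso \<phi>))"
| "enc_mso (MExSet X \<phi>) = prod_encode (6, prod_encode (X, enc_mso \<phi>))"
| "enc_mso (MExG u \<phi>) = prod_encode (7, prod_encode (u, enc_mso \<phi>))"

definition enc_input :: "dms \<times> mso \<Rightarrow> nat" where
  "enc_input x = prod_encode (enc_dms (fst x), enc_mso (snd x))"

end

theory Submission
  imports Defs "HOL-Library.Countable"
begin


inductive_cases RZE: "rf_eval RZ xs y"
inductive_cases RSE: "rf_eval RS xs y"
inductive_cases RIdE: "rf_eval (RId i) xs y"
inductive_cases RCnE: "rf_eval (RCn f gs) xs y"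
inductive_cases RPrE: "rf_eval (RPr f g) xs y"
inductive_cases RMnE: "rf_eval (RMn f) xs y"

lemma rf_det: "rf_eval f xs y \<Longrightarrow> rf_eval f xs y' \<Longrightarrow> y = y'"
proof (induction arbitrary: y' rule: rf_eval.induct)
  case (zero xs) then show ?case by (auto elim: RZE)
next
  case (succ x xs) then show ?case by (auto elim: RSE)
next
  case (proj i xs) then show ?case by (auto elim: RIdE)
next
  case (comp xs gs ys f y)
  from comp.prems obtain ys' where a: "list_all2 (\<lambda>g y. rf_eval g xs y) gs ys'" and b: "rf_eval f ys' y'"
    by (auto elim: RCnE)
  have "ys = ys'" using comp(1) a
  proof (induction gs arbitrary: ys ys')
    case Nil then show ?case by simp
  next
    case (Cons g gs)
    from Cons.prems(1) obtain z zs where 1: "ys = z # zs" "rf_eval g xs z \<and> (\<forall>y'. rf_eval g xs y' \<longrightarrow> z = y')"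
      "list_all2 (\<lambda>g y. rf_eval g xs y \<and> (\<forall>y'. rf_eval g xs y' \<longrightarrow> y = y')) gs zs"
      by (auto simp: list_all2_Cons1)
    from Cons.prems(2) obtain z' zs' where 2: "ys' = z' # zs'" "rf_eval g xs z'"
      "list_all2 (\<lambda>g y. rf_eval g xs y) gs zs'"
      by (auto simp: list_all2_Cons1)
    from Cons.IH[OF 1(3) 2(3)] 1 2 show ?case by blast
  qed
  with comp.IH b show ?case by blast
next
  case (pr0 f xs y g)
  from pr0.prems have "rf_eval f xs y'" by (auto elim: RPrE)
  with pr0.IH show ?case by blast
next
  case (prS f g n xs z y)
  from prS.prems obtain z' where "rf_eval (RPr f g) (n # xs) z'" "rf_eval g (z' # n # xs) y'"
    by (auto elim: RPrE)
  with prS.IH show ?case by metis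
next
  case (mn f n xs)
  from mn.prems obtain n' where a: "rf_eval f (n' # xs) 0" "\<forall>m<n'. \<exists>y. rf_eval f (m # xs) y \<and> 0 < y" and c: "y' = n'"
    by (auto elim: RMnE)
  have i1: "\<forall>y'. rf_eval f (n # xs) y' \<longrightarrow> 0 = y'" using mn.IH by blast
  have i2: "\<forall>m<n. \<exists>y. (rf_eval f (m # xs) y \<and> (\<forall>y'. rf_eval f (m # xs) y' \<longrightarrow> y = y')) \<and> y \<noteq> 0"
    using mn.IH by blast
  show ?case
  proof (rule ccontr)
    assume "n \<noteq> y'"
    hence "n < n' \<or> n' < n" using c by auto
    thus False
    proof
      assume "n < n'"
      with a(2) obtain y where "rf_eval f (n # xs) y" "0 < y" by blast
      with i1 show False by auto
    next
      assume "n' < n"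
      with i2 obtain y where "rf_eval f (n' # xs) y" "\<forall>y'. rf_eval f (n' # xs) y' \<longrightarrow> y = y'" "y \<noteq> 0" by blast
      with a(1) show False by auto
    qed
  qed
qed
fun cst :: "nat \<Rightarrow> recf" where
  "cst 0 = RZ" | "cst (Suc k) = RCn RS [cst k]"

lemma rf_cn1: "rf_eval a xs v \<Longrightarrow> rf_eval g [v] w \<Longrightarrow> rf_eval (RCn g [a]) xs w"
  by (rule rf_eval.comp[where ys="[v]"]) auto

lemma rf_cn2: "rf_eval a xs v \<Longrightarrow> rf_eval b xs u \<Longrightarrow> rf_eval g [v,u] w \<Longrightarrow> rf_eval (RCn g [a,b]) xs w"
  by (rule rf_eval.comp[where ys="[v,u]"]) auto

lemma rf_cst: "rf_eval (cst k) xs k"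
  by (induction k) (auto intro: rf_eval.intros rf_cn1)

lemma rf_id0: "rf_eval (RId 0) (x # xs) x"
  using rf_eval.proj[of 0 "x # xs"] by simp
lemma rf_id1: "rf_eval (RId 1) (x # y # xs) y"
  using rf_eval.proj[of 1 "x # y # xs"] by simp

definition "addt = RPr (RId 0) (RCn RS [RId 0])"

lemma rf_add: "rf_eval addt [a, b] (a + b)"
proof (induction a)
  case 0 then show ?case unfolding addt_def using rf_eval.pr0[OF rf_id0[of b "[]"]] by simp
next
  case (Suc a)
  have "rf_eval (RCn RS [RId 0]) [a + b, a, b] (Suc (a + b))"
    by (rule rf_cn1[OF rf_id0]) (rule rf_eval.succ)
  with Suc show ?case unfolding addt_def by (auto intro: rf_eval.prS)
qed

definition "trit = RPr RZ (RCn addt [RCn RS [RId 1], RId 0])"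

lemma rf_tri: "rf_eval trit [n] (triangle n)"
proof (induction n)
  case 0 then show ?case unfolding trit_def using rf_eval.pr0[OF rf_eval.zero[of "[]"]] by simp
next
  case (Suc n)
  have "rf_eval (RCn addt [RCn RS [RId 1], RId 0]) [triangle n, n] (Suc n + triangle n)"
    by (rule rf_cn2[OF rf_cn1[OF rf_id1 rf_eval.succ] rf_id0 rf_add])
  with Suc show ?case unfolding trit_def by (auto intro: rf_eval.prS simp: add.commute)
qed

definition "pet a b = RCn addt [RCn trit [RCn addt [a, b]], a]"

lemma rf_pet: "rf_eval a xs x \<Longrightarrow> rf_eval b xs y \<Longrightarrow> rf_eval (pet a b) xs (prod_encode (x, y))"
  unfolding pet_def prod_encode_def
  by (auto intro!: rf_cn2 rf_cn1 rf_add rf_tri)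




definition "MTrue = MExPos 0 (MQAt FTrue 0)"
definition "MFalse = MNot MTrue"
definition "MOr a b = MNot (MAnd (MNot a) (MNot b))"
definition "MImp a b = MNot (MAnd a (MNot b))"
definition "MAllG u a = MNot (MExG u (MNot a))"
definition "InF R vs = MExPos 0 (MQAt (FAtom R vs) 0)"
definition "Bv u p = MAnd (MNot (MQAt (FEq u u) p)) (MExPos (p+1) (MAnd (MAnd (MLess p (p+1))
   (MNot (MExPos (p+2) (MAnd (MLess p (p+2)) (MLess (p+2) (p+1)))))) (MQAt (FEq u u) (p+1))))"
definition "val0 u = MExPos 0 (MAnd (MNot (MExPos 1 (MLess 1 0))) (Bv u 0))"
definition "succv u w = MExPos 0 (MExPos 3 (MAnd (MAnd (Bv u 0) (Bv w 3))
   (MAnd (MLess 0 3) (MNot (MExPos 6 (MAnd (MLess 0 6) (MLess 6 3)))))))"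
definition "lessv u w = MExPos 0 (MExPos 3 (MAnd (MAnd (Bv u 0) (Bv w 3)) (MLess 0 3)))"
definition "eqv u w = MExPos 0 (MQAt (FEq u w) 0)"

lemma adom_empty[simp]: "adom {} = {}" by (simp add: adom_def)
lemma adom_insert[simp]: "adom (insert (r, a) I) = set a \<union> adom I" by (auto simp: adom_def)
lemma adom_Un[simp]: "adom (A \<union> B) = adom A \<union> adom B" by (auto simp: adom_def)
lemma fact_adom: "(r, a) \<in> I \<Longrightarrow> set a \<subseteq> adom I" by (auto simp: adom_def)

lemma fol_coinc: "(\<forall>u\<in>fol_fv q. \<sigma> u = \<sigma>' u) \<Longrightarrow> fol_holds I \<sigma> q = fol_holds I \<sigma>' q"
proof (induction q arbitrary: \<sigma> \<sigma>')
  case (FAtom r us)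
  then show ?case by (metis fol_fv.simps(2) fol_holds.simps(2) map_eq_conv)
next
  case (FEx u q)
  have "\<And>e. fol_holds I (\<sigma>(u := e)) q = fol_holds I (\<sigma>'(u := e)) q"
    by (rule FEx.IH) (use FEx.prems in auto)
  then show ?case by simp
next
  case (FNot q) then show ?case by simp
next
  case (FAnd q1 q2)
  have "fol_holds I \<sigma> q1 = fol_holds I \<sigma>' q1" "fol_holds I \<sigma> q2 = fol_holds I \<sigma>' q2"
    by (rule FAnd.IH; use FAnd.prems in auto)+
  then show ?case by simp
qed auto

lemma mso_coinc: "(\<forall>u\<in>mso_dfv \<phi>. \<xi> u = \<xi>' u) \<Longrightarrow> mso_holds \<rho> \<xi> \<pi> \<Pi> \<phi> = mso_holds \<rho> \<xi>' \<pi> \<Pi> \<phi>"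
proof (induction \<phi> arbitrary: \<xi> \<xi>' \<pi> \<Pi>)
  case (MQAt q x)
  then have "fol_holds (\<rho> (\<pi> x)) \<xi> q = fol_holds (\<rho> (\<pi> x)) \<xi>' q" by (intro fol_coinc) auto
  with MQAt show ?case by auto
next
  case (MExG u \<phi>)
  have "\<And>e. mso_holds \<rho> (\<xi>(u := e)) \<pi> \<Pi> \<phi> = mso_holds \<rho> (\<xi>'(u := e)) \<pi> \<Pi> \<phi>"
    by (rule MExG.IH) (use MExG.prems in auto)
  then show ?case by simp
next
  case (MNot \<phi>)
  have "\<And>\<pi> \<Pi>. mso_holds \<rho> \<xi> \<pi> \<Pi> \<phi> = mso_holds \<rho> \<xi>' \<pi> \<Pi> \<phi>"
    by (rule MNot.IH) (use MNot.prems in auto)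
  then show ?case by simp
next
  case (MAnd \<phi> \<psi>)
  have "\<And>\<pi> \<Pi>. mso_holds \<rho> \<xi> \<pi> \<Pi> \<phi> = mso_holds \<rho> \<xi>' \<pi> \<Pi> \<phi>"
    "\<And>\<pi> \<Pi>. mso_holds \<rho> \<xi> \<pi> \<Pi> \<psi> = mso_holds \<rho> \<xi>' \<pi> \<Pi> \<psi>"
    by (rule MAnd.IH; use MAnd.prems in auto)+
  then show ?case by simp
next
  case (MExPos x \<phi>)
  have "\<And>\<pi> \<Pi>. mso_holds \<rho> \<xi> \<pi> \<Pi> \<phi> = mso_holds \<rho> \<xi>' \<pi> \<Pi> \<phi>"
    by (rule MExPos.IH) (use MExPos.prems in auto)
  then show ?case by simp
next
  case (MExSet X \<phi>)
  have "\<And>\<pi> \<Pi>. mso_holds \<rho> \<xi> \<pi> \<Pi> \<phi> = mso_holds \<rho> \<xi>' \<pi> \<Pi> \<phi>"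
    by (rule MExSet.IH) (use MExSet.prems in auto)
  then show ?case by simp
qed auto

lemma comp_upd: "c \<circ> \<nu>(u := n) = (c \<circ> \<nu>)(u := c n)" by (rule ext) simp

locale brun =
  fixes \<rho> :: "nat \<Rightarrow> inst" and c :: "nat \<Rightarrow> nat"
  assumes injc: "inj c" and adomc: "\<And>i. adom (\<rho> i) = c ` {..<i}"
begin

definition "V = {(R, xs). \<exists>i. (R, map c xs) \<in> \<rho> i}"

lemma gadom_eq: "gadom \<rho> = range c"
  unfolding gadom_def adomc
proof (intro equalityI subsetI)
  fix y assume "y \<in> (\<Union>i. c ` {..<i})" then show "y \<in> range c" by auto
next
  fix y assume "y \<in> range c" then obtain x where "y = c x" by auto
  then show "y \<in> (\<Union>i. c ` {..<i})" by (intro UN_I[of "Suc x"]) auto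
qed

lemma sem_exG: "mso_holds \<rho> (c \<circ> \<nu>) \<pi> \<Pi> (MExG u \<phi>) = (\<exists>n. mso_holds \<rho> (c \<circ> \<nu>(u := n)) \<pi> \<Pi> \<phi>)"
proof -
  have "mso_holds \<rho> (c \<circ> \<nu>) \<pi> \<Pi> (MExG u \<phi>) = (\<exists>e\<in>range c. mso_holds \<rho> ((c \<circ> \<nu>)(u := e)) \<pi> \<Pi> \<phi>)"
    by (simp only: mso_holds.simps gadom_eq)
  also have "\<dots> = (\<exists>n. mso_holds \<rho> ((c \<circ> \<nu>)(u := c n)) \<pi> \<Pi> \<phi>)" by blast
  finally show ?thesis by (simp only: comp_upd)
qed

lemma sem_allG: "mso_holds \<rho> (c \<circ> \<nu>) \<pi> \<Pi> (MAllG u \<phi>) = (\<forall>n. mso_holds \<rho> (c \<circ> \<nu>(u := n)) \<pi> \<Pi> \<phi>)"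
  by (simp add: MAllG_def sem_exG del: mso_holds.simps(8))

lemma sem_In: "mso_holds \<rho> (c \<circ> \<nu>) \<pi> \<Pi> (InF R vs) = ((R, map \<nu> vs) \<in> V)"
proof -
  have "mso_holds \<rho> (c \<circ> \<nu>) \<pi> \<Pi> (InF R vs) = (\<exists>i. (R, map c (map \<nu> vs)) \<in> \<rho> i)"
    unfolding InF_def
  proof (simp only: mso_holds.simps fol_holds.simps fol_fv.simps map_map[symmetric], intro iffI)
    assume "\<exists>i. (\<forall>u\<in>set vs. (c \<circ> \<nu>) u \<in> adom (\<rho> ((\<pi>(0 := i)) 0))) \<and> (R, map c (map \<nu> vs)) \<in> \<rho> ((\<pi>(0 := i)) 0)"
    then show "\<exists>i. (R, map c (map \<nu> vs)) \<in> \<rho> i" by auto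
  next
    assume "\<exists>i. (R, map c (map \<nu> vs)) \<in> \<rho> i"
    then obtain i where i: "(R, map c (map \<nu> vs)) \<in> \<rho> i" by blast
    from fact_adom[OF i] have "\<forall>u\<in>set vs. (c \<circ> \<nu>) u \<in> adom (\<rho> i)" by auto
    with i show "\<exists>i. (\<forall>u\<in>set vs. (c \<circ> \<nu>) u \<in> adom (\<rho> ((\<pi>(0 := i)) 0))) \<and> (R, map c (map \<nu> vs)) \<in> \<rho> ((\<pi>(0 := i)) 0)"
      by auto
  qed
  then show ?thesis by (simp add: V_def)
qed

lemma inadom: "(c a \<in> adom (\<rho> i)) = (a < i)"
  using injc by (auto simp: adomc inj_eq)

lemma sem_Bv: "mso_holds \<rho> (c \<circ> \<nu>) \<pi> \<Pi> (Bv u p) = (\<nu> u = \<pi> p)"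
proof -
  have "mso_holds \<rho> (c \<circ> \<nu>) \<pi> \<Pi> (Bv u p) = (\<not> \<nu> u < \<pi> p \<and> (\<exists>j. \<pi> p < j \<and> \<not> (\<exists>r. \<pi> p < r \<and> r < j) \<and> \<nu> u < j))"
    by (simp add: Bv_def inadom)
  also have "\<dots> = (\<nu> u = \<pi> p)"
    by (auto intro!: exI[of _ "Suc (\<pi> p)"])
  finally show ?thesis .
qed

lemma sem_val0: "mso_holds \<rho> (c \<circ> \<nu>) \<pi> \<Pi> (val0 u) = (\<nu> u = 0)"
  by (auto simp: val0_def sem_Bv)

lemma sem_succv: "mso_holds \<rho> (c \<circ> \<nu>) \<pi> \<Pi> (succv u w) = (\<nu> w = Suc (\<nu> u))"
  by (auto simp: succv_def sem_Bv)

lemma sem_lessv: "mso_holds \<rho> (c \<circ> \<nu>) \<pi> \<Pi> (lessv u w) = (\<nu> u < \<nu> w)"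
  by (auto simp: lessv_def sem_Bv)

lemma sem_eqv: "mso_holds \<rho> (c \<circ> \<nu>) \<pi> \<Pi> (eqv u w) = (\<nu> u = \<nu> w)"
  using injc by (auto simp: eqv_def inadom inj_eq)

lemma sem_basic:
  "mso_holds \<rho> \<xi> \<pi> \<Pi> MTrue"
  "\<not> mso_holds \<rho> \<xi> \<pi> \<Pi> MFalse"
  "mso_holds \<rho> \<xi> \<pi> \<Pi> (MOr a b) = (mso_holds \<rho> \<xi> \<pi> \<Pi> a \<or> mso_holds \<rho> \<xi> \<pi> \<Pi> b)"
  "mso_holds \<rho> \<xi> \<pi> \<Pi> (MImp a b) = (mso_holds \<rho> \<xi> \<pi> \<Pi> a \<longrightarrow> mso_holds \<rho> \<xi> \<pi> \<Pi> b)"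
  by (auto simp: MTrue_def MFalse_def MOr_def MImp_def)

end



instance recf :: countable by countable_datatype

definition nm :: "recf \<Rightarrow> nat \<Rightarrow> nat" where "nm g l = Suc (to_nat (g, l))"

lemma nm_inj: "nm g l = nm g' l' \<longleftrightarrow> g = g' \<and> l = l'"
  by (auto simp: nm_def)

lemma nm_nz[simp]: "nm g l \<noteq> 0" by (simp add: nm_def)

fun subs :: "recf \<Rightarrow> nat \<Rightarrow> (recf \<times> nat) list" where
  "subs RZ l = [(RZ, l)]"
| "subs RS l = [(RS, l)]"
| "subs (RId i) l = [(RId i, l)]"
| "subs (RCn f gs) l = (RCn f gs, l) # subs f (length gs) @ concat (map (\<lambda>g. subs g l) gs)"
| "subs (RPr f g) l = (RPr f g, l) # subs f (l - 1) @ subs g (Suc l)"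
| "subs (RMn f) l = (RMn f, l) # subs f (Suc l)"

lemma subs_self: "(g, l) \<in> set (subs g l)"
  by (cases g) auto

lemma subs_trans: "(h, k) \<in> set (subs g l) \<Longrightarrow> set (subs h k) \<subseteq> set (subs g l)"
proof (induction g l rule: subs.induct)
  case (4 f gs l)
  then show ?case by fastforce
qed auto

fun Jsem :: "inst \<Rightarrow> recf \<Rightarrow> nat \<Rightarrow> nat list \<Rightarrow> nat \<Rightarrow> bool" where
  "Jsem V RZ l xs y = (y = 0)"
| "Jsem V RS l xs y = (0 < l \<and> y = Suc (xs ! 0))"
| "Jsem V (RId i) l xs y = (i < l \<and> y = xs ! i)"
| "Jsem V (RCn f gs) l xs y = (\<exists>ys. length ys = length gs \<and>
     (\<forall>j<length gs. (nm (gs ! j) l, xs @ [ys ! j]) \<in> V) \<and> (nm f (length gs), ys @ [y]) \<in> V)"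
| "Jsem V (RPr f g) l xs y = (0 < l \<and> ((xs ! 0 = 0 \<and> (nm f (l - 1), tl xs @ [y]) \<in> V) \<or>
     (\<exists>m z. xs ! 0 = Suc m \<and> (nm (RPr f g) l, (m # tl xs) @ [z]) \<in> V \<and>
        (nm g (Suc l), (z # m # tl xs) @ [y]) \<in> V)))"
| "Jsem V (RMn f) l xs y = ((nm f (Suc l), (y # xs) @ [0]) \<in> V \<and>
     (\<forall>m<y. \<exists>w. w \<noteq> 0 \<and> (nm f (Suc l), (m # xs) @ [w]) \<in> V))"

definition Wsem :: "inst \<Rightarrow> (recf \<times> nat) set \<Rightarrow> bool" where
  "Wsem V S = (\<forall>(g, l)\<in>S. \<forall>xs y. length xs = l \<longrightarrow> (nm g l, xs @ [y]) \<in> V \<longrightarrow> Jsem V g l xs y)"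

lemma WsemD: "Wsem V S \<Longrightarrow> (g, l) \<in> S \<Longrightarrow> length xs = l \<Longrightarrow> (nm g l, xs @ [y]) \<in> V \<Longrightarrow> Jsem V g l xs y"
  unfolding Wsem_def by blast

lemma soundness:
  assumes W: "Wsem V S"
  shows "set (subs g l) \<subseteq> S \<Longrightarrow> length xs = l \<Longrightarrow> (nm g l, xs @ [y]) \<in> V \<Longrightarrow> rf_eval g xs y"
proof (induction g arbitrary: l xs y)
  case RZ
  with W have "Jsem V RZ l xs y" by (auto simp: Wsem_def)
  then show ?case by (auto intro: rf_eval.zero)
next
  case RS
  with W have "Jsem V RS l xs y" by (auto simp: Wsem_def)
  then show ?case using RS.prems(2) by (cases xs) (auto intro: rf_eval.succ)
next
  case (RId i)
  with W have "Jsem V (RId i) l xs y" by (auto simp: Wsem_def)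
  then show ?case using RId.prems by (auto intro: rf_eval.proj)
next
  case (RCn f gs)
  with W have "Jsem V (RCn f gs) l xs y" by (auto simp: Wsem_def)
  then obtain ys where ys: "length ys = length gs" "\<forall>j<length gs. (nm (gs ! j) l, xs @ [ys ! j]) \<in> V"
    "(nm f (length gs), ys @ [y]) \<in> V" by auto
  have f: "rf_eval f ys y"
    by (rule RCn.IH(1)) (use RCn.prems ys in auto)
  have "\<forall>j<length gs. rf_eval (gs ! j) xs (ys ! j)"
  proof (intro allI impI)
    fix j assume j: "j < length gs"
    then have "gs ! j \<in> set gs" by simp
    moreover have "set (subs (gs ! j) l) \<subseteq> S"
      using RCn.prems(1) j by (auto dest!: nth_mem[of j gs])
    ultimately show "rf_eval (gs ! j) xs (ys ! j)"
      using RCn.IH(2) RCn.prems ys j by blast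
  qed
  then have "list_all2 (\<lambda>g y. rf_eval g xs y) gs ys"
    using ys(1) by (simp add: list_all2_conv_all_nth)
  with f show ?case by (blast intro: rf_eval.comp)
next
  case (RPr f g)
  then obtain n xs' where xs: "xs = n # xs'" using W by (cases xs) (auto simp: Wsem_def)
  have inS: "(RPr f g, l) \<in> S" using RPr.prems(1) by auto
  have fS: "set (subs f (l - 1)) \<subseteq> S" "set (subs g (Suc l)) \<subseteq> S" using RPr.prems(1) by auto
  have "\<forall>y. (nm (RPr f g) l, (n # xs') @ [y]) \<in> V \<longrightarrow> rf_eval (RPr f g) (n # xs') y"
  proof (induction n)
    case 0
    show ?case
    proof (intro allI impI)
      fix y assume "(nm (RPr f g) l, (0 # xs') @ [y]) \<in> V"
      with W inS RPr.prems(2) xs have "Jsem V (RPr f g) l (0 # xs') y" by (intro WsemD) auto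
      then have "(nm f (l - 1), xs' @ [y]) \<in> V" by auto
      then have "rf_eval f xs' y" using RPr.IH(1)[OF fS(1)] RPr.prems(2) xs by auto
      then show "rf_eval (RPr f g) (0 # xs') y" by (rule rf_eval.pr0)
    qed
  next
    case (Suc n)
    show ?case
    proof (intro allI impI)
      fix y assume "(nm (RPr f g) l, (Suc n # xs') @ [y]) \<in> V"
      with W inS RPr.prems(2) xs have "Jsem V (RPr f g) l (Suc n # xs') y" by (intro WsemD) auto
      then obtain z where z: "(nm (RPr f g) l, (n # xs') @ [z]) \<in> V" "(nm g (Suc l), (z # n # xs') @ [y]) \<in> V"
        by auto
      have "rf_eval g (z # n # xs') y" using RPr.IH(2)[OF fS(2)] z(2) RPr.prems(2) xs by auto
      with Suc z(1) show "rf_eval (RPr f g) (Suc n # xs') y" by (auto intro: rf_eval.prS)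
    qed
  qed
  with RPr.prems(3) xs show ?case by auto
next
  case (RMn f)
  with W have J0: "Jsem V (RMn f) l xs y" by (auto simp: Wsem_def)
  have fS: "set (subs f (Suc l)) \<subseteq> S" using RMn.prems(1) by auto
  note J = J0
  have IH: "\<And>zs v. length zs = Suc l \<Longrightarrow> (nm f (Suc l), zs @ [v]) \<in> V \<Longrightarrow> rf_eval f zs v"
    using RMn.IH[OF fS] by blast
  from J have 1: "rf_eval f (y # xs) 0" using IH RMn.prems(2) by auto
  have 2: "\<forall>m<y. \<exists>w. rf_eval f (m # xs) w \<and> w \<noteq> 0"
  proof (intro allI impI)
    fix m assume "m < y"
    with J obtain w where "w \<noteq> 0" "(nm f (Suc l), (m # xs) @ [w]) \<in> V" by auto
    then show "\<exists>w. rf_eval f (m # xs) w \<and> w \<noteq> 0" using IH[of "m # xs" w] RMn.prems(2) by auto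
  qed
  from 1 2 show ?case by (rule rf_eval.mn)
qed

definition Vstar :: "(recf \<times> nat) set \<Rightarrow> inst" where
  "Vstar S = {(nm g l, xs @ [y]) | g l xs y. (g, l) \<in> S \<and> length xs = l \<and> rf_eval g xs y}"

lemma jsem_mono: "V \<subseteq> V' \<Longrightarrow> Jsem V g l xs y \<Longrightarrow> Jsem V' g l xs y"
  by (cases g) (simp_all, blast+)

lemma VstarI: "(g, l) \<in> S \<Longrightarrow> length xs = l \<Longrightarrow> rf_eval g xs y \<Longrightarrow> (nm g l, xs @ [y]) \<in> Vstar S"
  unfolding Vstar_def by blast

lemma jsem_true:
  assumes S: "set (subs g l) \<subseteq> S" and L: "length xs = l" and E: "rf_eval g xs y"
  shows "Jsem (Vstar S) g l xs y"
  using E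
proof (cases rule: rf_eval.cases)
  case (zero)
  then show ?thesis by simp
next
  case (succ x xs')
  then show ?thesis using L by auto
next
  case (proj i)
  then show ?thesis using L by auto
next
  case (comp gs ys f)
  have len: "length ys = length gs" using comp(2) by (simp add: list_all2_conv_all_nth)
  have ev: "\<forall>j<length gs. rf_eval (gs ! j) xs (ys ! j)" using comp(2) by (simp add: list_all2_conv_all_nth)
  have gS: "(gs ! j, l) \<in> S" if "j < length gs" for j
  proof -
    have "gs ! j \<in> set gs" using that by simp
    then have "set (subs (gs ! j) l) \<subseteq> set (subs g l)" using comp(1) by auto
    then show ?thesis using S subs_self[of "gs ! j" l] by blast
  qed
  have fS: "(f, length gs) \<in> S" using S comp(1) subs_self[of f "length gs"] by auto
  show ?thesis unfolding comp(1) Jsem.simps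
  proof (intro exI conjI allI impI)
    show "length ys = length gs" by (fact len)
    fix j assume "j < length gs"
    then show "(nm (gs ! j) l, xs @ [ys ! j]) \<in> Vstar S" using gS ev L by (blast intro: VstarI)
  next
    show "(nm f (length gs), ys @ [y]) \<in> Vstar S" using fS len comp(3) by (blast intro: VstarI)
  qed
next
  case (pr0 f xs' g')
  have fS: "(f, l - 1) \<in> S" using S pr0(1) subs_self[of f "l - 1"] by auto
  have "(nm f (l - 1), xs' @ [y]) \<in> Vstar S" using fS L pr0 by (intro VstarI) auto
  then show ?thesis using pr0 L by auto
next
  case (prS f g' n xs' z)
  have pS: "(RPr f g', l) \<in> S" using S prS(1) subs_self[of g l] by auto
  have gS: "(g', Suc l) \<in> S" using S prS(1) subs_self[of g' "Suc l"] by auto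
  have 1: "(nm (RPr f g') l, (n # xs') @ [z]) \<in> Vstar S" using pS L prS by (intro VstarI) auto
  have 2: "(nm g' (Suc l), (z # n # xs') @ [y]) \<in> Vstar S" using gS L prS by (intro VstarI) auto
  show ?thesis unfolding prS(1) Jsem.simps using 1 2 L prS(2) by auto
next
  case (mn f)
  have fS: "(f, Suc l) \<in> S" using S mn(1) subs_self[of f "Suc l"] by auto
  have 1: "(nm f (Suc l), (y # xs) @ [0]) \<in> Vstar S" using fS L mn by (intro VstarI) auto
  have 2: "\<forall>m<y. \<exists>w. w \<noteq> 0 \<and> (nm f (Suc l), (m # xs) @ [w]) \<in> Vstar S"
  proof (intro allI impI)
    fix m assume "m < y"
    with mn(3) obtain w where w: "rf_eval f (m # xs) w" "w \<noteq> 0" by blast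
    have "(nm f (Suc l), (m # xs) @ [w]) \<in> Vstar S" by (rule VstarI[OF fS]) (use L w in auto)
    with w(2) show "\<exists>w. w \<noteq> 0 \<and> (nm f (Suc l), (m # xs) @ [w]) \<in> Vstar S" by blast
  qed
  show ?thesis using 1 2 mn(1) by (simp only: Jsem.simps)
qed




definition xsv :: "nat \<Rightarrow> nat list" where "xsv l = map (\<lambda>i. 10 + i) [0..<l]"
definition ysv :: "nat \<Rightarrow> nat \<Rightarrow> nat list" where "ysv l k = map (\<lambda>j. 10 + l + j) [0..<k]"

fun mconj :: "mso list \<Rightarrow> mso" where
  "mconj [] = MTrue" | "mconj (a # as) = MAnd a (mconj as)"
fun exGs :: "nat list \<Rightarrow> mso \<Rightarrow> mso" where
  "exGs [] a = a" | "exGs (v # vs) a = MExG v (exGs vs a)"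
fun allGs :: "nat list \<Rightarrow> mso \<Rightarrow> mso" where
  "allGs [] a = a" | "allGs (v # vs) a = MAllG v (allGs vs a)"
fun upds :: "(nat \<Rightarrow> nat) \<Rightarrow> nat list \<Rightarrow> nat list \<Rightarrow> nat \<Rightarrow> nat" where
  "upds \<nu> (v # vs) (n # ns) = upds (\<nu>(v := n)) vs ns"
| "upds \<nu> _ _ = \<nu>"

lemma upds_notin: "x \<notin> set vs \<Longrightarrow> upds \<nu> vs ns x = \<nu> x"
  by (induction \<nu> vs ns rule: upds.induct) auto

lemma upds_map: "distinct vs \<Longrightarrow> length ns = length vs \<Longrightarrow> map (upds \<nu> vs ns) vs = ns"
proof (induction \<nu> vs ns rule: upds.induct)
  case (1 \<nu> v vs n ns)
  have "map (upds (\<nu>(v := n)) vs ns) vs = ns" by (rule "1.IH") (use "1.prems" in auto)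
  moreover have "upds (\<nu>(v := n)) vs ns v = n" using 1 by (simp add: upds_notin)
  ultimately show ?case by simp
qed auto

lemma map_upds_notin: "set ws \<inter> set vs = {} \<Longrightarrow> map (upds \<nu> vs ns) ws = map \<nu> ws"
  by (intro map_cong refl upds_notin) blast

lemma xsv_len[simp]: "length (xsv l) = l" by (simp add: xsv_def)
lemma ysv_len[simp]: "length (ysv l k) = k" by (simp add: ysv_def)
lemma xsv_set: "set (xsv l) = {10..<10 + l}" by (auto simp: xsv_def)
lemma ysv_set: "set (ysv l k) = {10 + l..<10 + l + k}" by (force simp: ysv_def)
lemma xsv_dist[simp]: "distinct (xsv l)" by (simp add: xsv_def distinct_map)
lemma ysv_dist[simp]: "distinct (ysv l k)" by (simp add: ysv_def distinct_map)
lemma xsv_nth[simp]: "i < l \<Longrightarrow> xsv l ! i = 10 + i" by (simp add: xsv_def)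
lemma ysv_nth[simp]: "j < k \<Longrightarrow> ysv l k ! j = 10 + l + j" by (simp add: ysv_def)

fun J :: "recf \<Rightarrow> nat \<Rightarrow> mso" where
  "J RZ l = val0 0"
| "J RS l = (if 0 < l then succv 10 0 else MFalse)"
| "J (RId i) l = (if i < l then eqv 0 (10 + i) else MFalse)"
| "J (RCn f gs) l = exGs (ysv l (length gs))
     (MAnd (mconj (map (\<lambda>j. InF (nm (gs ! j) l) (xsv l @ [ysv l (length gs) ! j])) [0..<length gs]))
       (InF (nm f (length gs)) (ysv l (length gs) @ [0])))"
| "J (RPr f g) l = (if 0 < l then MOr (MAnd (val0 10) (InF (nm f (l - 1)) (tl (xsv l) @ [0])))
     (MExG 1 (MExG 2 (MAnd (succv 1 10) (MAnd (InF (nm (RPr f g) l) (1 # tl (xsv l) @ [2]))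
        (InF (nm g (Suc l)) (2 # 1 # tl (xsv l) @ [0])))))) else MFalse)"
| "J (RMn f) l = MAnd (MExG 2 (MAnd (val0 2) (InF (nm f (Suc l)) (0 # xsv l @ [2]))))
     (MAllG 1 (MImp (lessv 1 0) (MExG 2 (MAnd (MNot (val0 2)) (InF (nm f (Suc l)) (1 # xsv l @ [2]))))))"

definition Wf :: "(recf \<times> nat) list \<Rightarrow> mso" where
  "Wf SL = mconj (map (\<lambda>(g, l). MAllG 0 (allGs (xsv l) (MImp (InF (nm g l) (xsv l @ [0])) (J g l)))) SL)"

fun theta :: "nat \<Rightarrow> mso" where
  "theta 0 = val0 0"
| "theta (Suc k) = MExG 1 (MAnd (succv 1 0) (MExG 0 (MAnd (eqv 0 1) (theta k))))"

definition Af :: "(recf \<times> nat) list \<Rightarrow> recf \<Rightarrow> mso" where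
  "Af SL tp = MAnd (Wf SL) (MExG 2 (MAnd (MExG 3 (MAnd (val0 3) (succv 3 2))) (InF (nm tp 2) [0, 1, 2])))"

definition Phi :: "nat \<Rightarrow> nat \<Rightarrow> mso \<Rightarrow> mso" where
  "Phi n m A = MNot (MExG 0 (MAnd (theta n) (MExG 1 (MAnd (MExG 0 (MAnd (eqv 0 1) (theta m))) A))))"

context brun
begin

lemma sem_exGs: "mso_holds \<rho> (c \<circ> \<nu>) \<pi> \<Pi> (exGs vs a) =
   (\<exists>ns. length ns = length vs \<and> mso_holds \<rho> (c \<circ> upds \<nu> vs ns) \<pi> \<Pi> a)"
proof (induction vs arbitrary: \<nu>)
  case Nil then show ?case by simp
next
  case (Cons v vs)
  have "mso_holds \<rho> (c \<circ> \<nu>) \<pi> \<Pi> (exGs (v # vs) a) =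
    (\<exists>n ns. length ns = length vs \<and> mso_holds \<rho> (c \<circ> upds (\<nu>(v := n)) vs ns) \<pi> \<Pi> a)"
    by (simp only: exGs.simps sem_exG Cons.IH)
  also have "\<dots> = (\<exists>ns. length ns = length (v # vs) \<and> mso_holds \<rho> (c \<circ> upds \<nu> (v # vs) ns) \<pi> \<Pi> a)"
  proof
    assume "\<exists>n ns. length ns = length vs \<and> mso_holds \<rho> (c \<circ> upds (\<nu>(v := n)) vs ns) \<pi> \<Pi> a"
    then obtain n ns where "length ns = length vs" "mso_holds \<rho> (c \<circ> upds (\<nu>(v := n)) vs ns) \<pi> \<Pi> a" by blast
    then show "\<exists>ns. length ns = length (v # vs) \<and> mso_holds \<rho> (c \<circ> upds \<nu> (v # vs) ns) \<pi> \<Pi> a"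
      by (intro exI[of _ "n # ns"]) simp
  next
    assume "\<exists>ns. length ns = length (v # vs) \<and> mso_holds \<rho> (c \<circ> upds \<nu> (v # vs) ns) \<pi> \<Pi> a"
    then obtain ns' where ns': "length ns' = length (v # vs)" "mso_holds \<rho> (c \<circ> upds \<nu> (v # vs) ns') \<pi> \<Pi> a" by blast
    then obtain n ns where "ns' = n # ns" by (cases ns') auto
    with ns' show "\<exists>n ns. length ns = length vs \<and> mso_holds \<rho> (c \<circ> upds (\<nu>(v := n)) vs ns) \<pi> \<Pi> a"
      by auto
  qed
  finally show ?case .
qed

lemma sem_allGs: "mso_holds \<rho> (c \<circ> \<nu>) \<pi> \<Pi> (allGs vs a) =
   (\<forall>ns. length ns = length vs \<longrightarrow> mso_holds \<rho> (c \<circ> upds \<nu> vs ns) \<pi> \<Pi> a)"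
proof (induction vs arbitrary: \<nu>)
  case Nil then show ?case by simp
next
  case (Cons v vs)
  have "mso_holds \<rho> (c \<circ> \<nu>) \<pi> \<Pi> (allGs (v # vs) a) =
    (\<forall>n ns. length ns = length vs \<longrightarrow> mso_holds \<rho> (c \<circ> upds (\<nu>(v := n)) vs ns) \<pi> \<Pi> a)"
    by (simp only: allGs.simps sem_allG Cons.IH)
  also have "\<dots> = (\<forall>ns. length ns = length (v # vs) \<longrightarrow> mso_holds \<rho> (c \<circ> upds \<nu> (v # vs) ns) \<pi> \<Pi> a)"
  proof
    assume H: "\<forall>n ns. length ns = length vs \<longrightarrow> mso_holds \<rho> (c \<circ> upds (\<nu>(v := n)) vs ns) \<pi> \<Pi> a"
    show "\<forall>ns. length ns = length (v # vs) \<longrightarrow> mso_holds \<rho> (c \<circ> upds \<nu> (v # vs) ns) \<pi> \<Pi> a"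
    proof (intro allI impI)
      fix ns' :: "nat list" assume "length ns' = length (v # vs)"
      then obtain n ns where "ns' = n # ns" "length ns = length vs" by (cases ns') auto
      with H show "mso_holds \<rho> (c \<circ> upds \<nu> (v # vs) ns') \<pi> \<Pi> a" by simp
    qed
  next
    assume H: "\<forall>ns. length ns = length (v # vs) \<longrightarrow> mso_holds \<rho> (c \<circ> upds \<nu> (v # vs) ns) \<pi> \<Pi> a"
    show "\<forall>n ns. length ns = length vs \<longrightarrow> mso_holds \<rho> (c \<circ> upds (\<nu>(v := n)) vs ns) \<pi> \<Pi> a"
    proof (intro allI impI)
      fix n :: nat and ns :: "nat list" assume "length ns = length vs"
      with H[rule_format, of "n # ns"] show "mso_holds \<rho> (c \<circ> upds (\<nu>(v := n)) vs ns) \<pi> \<Pi> a" by simp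
    qed
  qed
  finally show ?case .
qed

lemma sem_mconj: "mso_holds \<rho> \<xi> \<pi> \<Pi> (mconj as) = (\<forall>a\<in>set as. mso_holds \<rho> \<xi> \<pi> \<Pi> a)"
  by (induction as) (auto simp: sem_basic)


lemma sem_theta: "mso_holds \<rho> (c \<circ> \<nu>) \<pi> \<Pi> (theta k) = (\<nu> 0 = k)"
proof (induction k arbitrary: \<nu>)
  case 0 then show ?case by (simp only: theta.simps sem_val0)
next
  case (Suc k)
  show ?case
    by (simp only: theta.simps mso_holds.simps(5) sem_exG sem_succv sem_eqv Suc.IH) auto
qed

lemma map_xsv_eq: "(\<And>u. 10 \<le> u \<Longrightarrow> \<nu>' u = \<nu> u) \<Longrightarrow> map \<nu>' (xsv l) = map \<nu> (xsv l)"
  by (simp add: xsv_def)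

lemma map_tl_xsv_eq: assumes "\<And>u. 10 \<le> u \<Longrightarrow> \<nu>' u = \<nu> u" shows "map \<nu>' (tl (xsv l)) = tl (map \<nu> (xsv l))"
proof -
  have e: "map \<nu>' (xsv l) = map \<nu> (xsv l)" by (rule map_xsv_eq) (fact assms)
  show ?thesis unfolding map_tl e by (rule refl)
qed

lemma sem_J_RCn: "mso_holds \<rho> (c \<circ> \<nu>) \<pi> \<Pi> (J (RCn f gs) l) = Jsem V (RCn f gs) l (map \<nu> (xsv l)) (\<nu> 0)"
proof -
  let ?k = "length gs"
  have A: "mso_holds \<rho> (c \<circ> upds \<nu> (ysv l ?k) ns) \<pi> \<Pi>
     (MAnd (mconj (map (\<lambda>j. InF (nm (gs ! j) l) (xsv l @ [ysv l ?k ! j])) [0..<?k]))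
       (InF (nm f ?k) (ysv l ?k @ [0]))) =
     ((\<forall>j<?k. (nm (gs ! j) l, map \<nu> (xsv l) @ [ns ! j]) \<in> V) \<and> (nm f ?k, ns @ [\<nu> 0]) \<in> V)"
    if len: "length ns = ?k" for ns
  proof -
    let ?n = "upds \<nu> (ysv l ?k) ns"
    have m1: "map ?n (ysv l ?k) = ns" using len by (simp add: upds_map)
    have m2: "map ?n (xsv l) = map \<nu> (xsv l)"
      by (rule map_upds_notin) (auto simp: xsv_set ysv_set)
    have m3: "?n 0 = \<nu> 0" by (rule upds_notin) (auto simp: ysv_set)
    have m4: "?n (ysv l ?k ! j) = ns ! j" if "j < ?k" for j
      using m1 that len by (metis nth_map ysv_len)
    show ?thesis
      by (auto simp: sem_mconj sem_In m2 m3 m4 m1 simp del: ysv_nth)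
  qed
  have "mso_holds \<rho> (c \<circ> \<nu>) \<pi> \<Pi> (J (RCn f gs) l) = (\<exists>ns. length ns = ?k \<and> mso_holds \<rho> (c \<circ> upds \<nu> (ysv l ?k) ns) \<pi> \<Pi>
     (MAnd (mconj (map (\<lambda>j. InF (nm (gs ! j) l) (xsv l @ [ysv l ?k ! j])) [0..<?k]))
       (InF (nm f ?k) (ysv l ?k @ [0]))))"
    by (simp only: J.simps sem_exGs ysv_len)
  also have "\<dots> = (\<exists>ns. length ns = ?k \<and> ((\<forall>j<?k. (nm (gs ! j) l, map \<nu> (xsv l) @ [ns ! j]) \<in> V) \<and> (nm f ?k, ns @ [\<nu> 0]) \<in> V))"
    by (rule ex_cong) (rule A)
  finally show ?thesis by simp
qed

lemma sem_J: "mso_holds \<rho> (c \<circ> \<nu>) \<pi> \<Pi> (J g l) = Jsem V g l (map \<nu> (xsv l)) (\<nu> 0)"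
proof (cases g)
  case RZ then show ?thesis by (simp add: sem_val0)
next
  case RS then show ?thesis by (auto simp: sem_succv sem_basic xsv_def)
next
  case (RId i) then show ?thesis by (auto simp: sem_eqv sem_basic xsv_def)
next
  case (RCn f gs) then show ?thesis by (simp only: sem_J_RCn)
next
  case (RPr f g')
  show ?thesis
  proof (cases "0 < l")
    case False then show ?thesis using RPr by (simp add: sem_basic)
  next
    case True
    have t: "map (\<nu>(Suc 0 := m, 2 := z)) (tl (xsv l)) = tl (map \<nu> (xsv l))" for m z
      by (rule map_tl_xsv_eq) auto
    have t0: "map \<nu> (tl (xsv l)) = tl (map \<nu> (xsv l))"
      by (rule map_tl_xsv_eq) auto
    have h: "map \<nu> (xsv l) ! 0 = \<nu> 10" using True by simp
    have ten: "(\<nu>(1 := m, 2 := z)) 10 = \<nu> 10" for m z by simp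
    show ?thesis using RPr True
      by (simp add: sem_basic sem_val0 sem_In sem_exG sem_succv t t0 h del: mso_holds.simps(8))
  qed
next
  case (RMn f)
  have t: "map (\<nu>(Suc 0 := m, 2 := z)) (xsv l) = map \<nu> (xsv l)" for m z
    by (rule map_xsv_eq) auto
  have t2: "map (\<nu>(2 := z)) (xsv l) = map \<nu> (xsv l)" for z
    by (rule map_xsv_eq) auto
  have t3: "map (\<nu>(Suc 0 := m)) (xsv l) = map \<nu> (xsv l)" for m
    by (rule map_xsv_eq) auto
  show ?thesis using RMn
    by (simp add: sem_basic sem_val0 sem_In sem_exG sem_allG sem_lessv t t2 t3 del: mso_holds.simps(8))
qed

lemma sem_Wf: "mso_holds \<rho> (c \<circ> \<nu>) \<pi> \<Pi> (Wf SL) = Wsem V (set SL)"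
proof -
  have one: "mso_holds \<rho> (c \<circ> \<nu>) \<pi> \<Pi> (MAllG 0 (allGs (xsv l) (MImp (InF (nm g l) (xsv l @ [0])) (J g l)))) =
    (\<forall>xs y. length xs = l \<longrightarrow> (nm g l, xs @ [y]) \<in> V \<longrightarrow> Jsem V g l xs y)" for g l
  proof -
    have "mso_holds \<rho> (c \<circ> \<nu>) \<pi> \<Pi> (MAllG 0 (allGs (xsv l) (MImp (InF (nm g l) (xsv l @ [0])) (J g l)))) =
      (\<forall>y ns. length ns = l \<longrightarrow> ((nm g l, map (upds (\<nu>(0 := y)) (xsv l) ns) (xsv l) @ [upds (\<nu>(0 := y)) (xsv l) ns 0]) \<in> V
         \<longrightarrow> Jsem V g l (map (upds (\<nu>(0 := y)) (xsv l) ns) (xsv l)) (upds (\<nu>(0 := y)) (xsv l) ns 0)))"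
      by (simp add: sem_allG sem_allGs sem_basic sem_In sem_J del: mso_holds.simps(8))
    also have "\<dots> = (\<forall>y ns. length ns = l \<longrightarrow> (nm g l, ns @ [y]) \<in> V \<longrightarrow> Jsem V g l ns y)"
    proof -
      have "upds (\<nu>(0 := y)) (xsv l) ns 0 = y" for y ns by (subst upds_notin) (auto simp: xsv_set)
      moreover have "length ns = l \<Longrightarrow> map (upds (\<nu>(0 := y)) (xsv l) ns) (xsv l) = ns" for y ns
        by (simp add: upds_map)
      ultimately show ?thesis by auto
    qed
    finally show ?thesis by blast
  qed
  show ?thesis unfolding Wf_def Wsem_def
    by (auto simp: sem_mconj one)
qed

lemma sem_Phi: "mso_holds \<rho> (c \<circ> \<nu>) \<pi> \<Pi> (Phi n m (Af SL tp)) =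
  (\<not> (Wsem V (set SL) \<and> (nm tp 2, [n, m, 1]) \<in> V))"
  by (simp add: Phi_def Af_def sem_exG sem_theta sem_eqv sem_Wf sem_val0 sem_succv sem_In del: mso_holds.simps(8))

end



fun eqconj :: "nat list \<Rightarrow> fol" where
  "eqconj [] = FTrue" | "eqconj (u # us) = FAnd (FEq u u) (eqconj us)"

lemma eqconj_holds: "fol_holds I \<sigma> (eqconj us)" by (induction us) auto
lemma eqconj_fv: "fol_fv (eqconj us) = set us" by (induction us) auto
lemma eqconj_over: "fol_over R (eqconj us)" by (induction us) auto

definition act_of :: "nat \<times> nat \<Rightarrow> action" where
  "act_of Ra = Action [1..<Suc (snd Ra)] [0] (eqconj [1..<Suc (snd Ra)]) [] [(0, [0]), (fst Ra, [1..<Suc (snd Ra)])]"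

definition "idle = Action [] [0] FTrue [] [(0, [0])]"

definition ents :: "(recf \<times> nat) list \<Rightarrow> (nat \<times> nat) list" where
  "ents SL = map (\<lambda>(g, l). (nm g l, Suc l)) (remdups SL)"

definition mkdms :: "(recf \<times> nat) list \<Rightarrow> dms" where
  "mkdms SL = DMS ((0, 1) # ents SL) [] (idle # map act_of (ents SL))"

lemma wf_mkdms: "wf_dms (mkdms SL)"
proof -
  have d: "distinct (map fst (ents SL))"
    unfolding ents_def by (auto simp: distinct_map inj_on_def nm_inj)
  have z: "0 \<notin> fst ` set (ents SL)" by (auto simp: ents_def)
  have wa: "wf_action ((0, 1) # ents SL) a" if "a \<in> set (idle # map act_of (ents SL))" for a
  proof -
    from that consider "a = idle" | Ra where "Ra \<in> set (ents SL)" "a = act_of Ra" by auto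
    then show ?thesis
    proof cases
      case 1 then show ?thesis by (auto simp: wf_action_def idle_def fact_over_def)
    next
      case 2
      obtain R k where Ra: "Ra = (R, k)" by (cases Ra)
      have mem: "(R, k) \<in> set ((0, 1) # ents SL)" using 2 Ra by simp
      have "fact_over ((0, 1) # ents SL) (R, [1..<Suc k])" using mem by (simp add: fact_over_def del: upt_Suc)
      moreover have "fact_over ((0, 1) # ents SL) (0, [0])" by (simp add: fact_over_def)
      ultimately show ?thesis using 2 Ra
        by (auto simp: wf_action_def act_of_def eqconj_fv eqconj_over)
    qed
  qed
  show ?thesis unfolding wf_dms_def using d z wa by (auto simp: mkdms_def)
qed

lemma subst_inst_simps[simp]: "subst_inst \<sigma> [] = {}"
  "subst_inst \<sigma> (f # fs) = insert (fst f, map \<sigma> (snd f)) (subst_inst \<sigma> fs)"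
  by (auto simp: subst_inst_def split: prod.splits)

lemma step_shape:
  assumes "dms_step (mkdms SL) (I, H) (I', H')" "adom I \<subseteq> H"
  shows "\<exists>e. e \<notin> H \<and> H' = insert e H \<and> adom I' = insert e (adom I)"
proof -
  from assms(1) obtain a \<sigma> where a: "a \<in> set (idle # map act_of (ents SL))"
    and p: "\<forall>u\<in>set (a_params a). \<sigma> u \<in> adom I"
    and f: "\<forall>v\<in>set (a_fresh a). \<sigma> v \<notin> H"
    and I': "I' = (I - subst_inst \<sigma> (a_del a)) \<union> subst_inst \<sigma> (a_add a)"
    and H': "H' = H \<union> \<sigma> ` set (a_fresh a)"
    unfolding dms_step_def mkdms_def by auto
  from a consider "a = idle" | Ra where "a = act_of Ra" by auto
  then show ?thesis
  proof cases
    case 1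
    then show ?thesis using f I' H' by (intro exI[of _ "\<sigma> 0"]) (auto simp: idle_def)
  next
    case 2
    then have "set (map \<sigma> [1..<Suc (snd Ra)]) \<subseteq> adom I" using p by (auto simp: act_of_def)
    then show ?thesis using f I' H' 2 by (intro exI[of _ "\<sigma> 0"]) (auto simp: act_of_def)
  qed
qed

lemma run_brun:
  assumes "is_run (mkdms SL) \<rho>"
  shows "\<exists>c. brun \<rho> c"
proof -
  from assms obtain H where H0: "H 0 = {}" and r0: "\<rho> 0 = init_inst (mkdms SL)"
    and st: "\<And>i. dms_step (mkdms SL) (\<rho> i, H i) (\<rho> (Suc i), H (Suc i))"
    unfolding is_run_def by blast
  have r00: "\<rho> 0 = {}" using r0 by (simp add: init_inst_def mkdms_def)
  define c where "c i = (SOME e. e \<notin> H i \<and> H (Suc i) = insert e (H i) \<and> adom (\<rho> (Suc i)) = insert e (adom (\<rho> i)))" for i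
  have inv: "adom (\<rho> i) = H i \<and> H i = c ` {..<i}" for i
  proof (induction i)
    case 0 then show ?case by (simp add: H0 r00)
  next
    case (Suc i)
    then have "\<exists>e. e \<notin> H i \<and> H (Suc i) = insert e (H i) \<and> adom (\<rho> (Suc i)) = insert e (adom (\<rho> i))"
      using step_shape[OF st] by blast
    then have "c i \<notin> H i \<and> H (Suc i) = insert (c i) (H i) \<and> adom (\<rho> (Suc i)) = insert (c i) (adom (\<rho> i))"
      unfolding c_def by (rule someI_ex)
    with Suc show ?case by (auto simp: lessThan_Suc)
  qed
  have cn: "c i \<notin> H i" for i
  proof -
    have "\<exists>e. e \<notin> H i \<and> H (Suc i) = insert e (H i) \<and> adom (\<rho> (Suc i)) = insert e (adom (\<rho> i))"
      using step_shape[OF st] inv by blast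
    then have "c i \<notin> H i \<and> H (Suc i) = insert (c i) (H i) \<and> adom (\<rho> (Suc i)) = insert (c i) (adom (\<rho> i))"
      unfolding c_def by (rule someI_ex)
    then show ?thesis by blast
  qed
  have "inj c"
  proof (rule injI)
    fix x y assume e: "c x = c y"
    show "x = y"
    proof (rule ccontr)
      assume "x \<noteq> y"
      then have "x < y \<or> y < x" by auto
      then show False
      proof
        assume "x < y" then have "c x \<in> H y" using inv[of y] by auto
        with cn[of y] e show False by simp
      next
        assume "y < x" then have "c y \<in> H x" using inv[of x] by auto
        with cn[of x] e show False by simp
      qed
    qed
  qed
  then have "brun \<rho> c" using inv by unfold_locales auto
  then show ?thesis by blast
qed




definition finfo :: "nat \<Rightarrow> recf \<times> nat \<times> nat list \<times> nat" where
  "finfo j = from_nat (fst (prod_decode j))"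

definition good :: "(recf \<times> nat) list \<Rightarrow> nat \<Rightarrow> bool" where
  "good SL j = (case finfo j of (g, l, xs, y) \<Rightarrow> (g, l) \<in> set SL \<and> length xs = l \<and> rf_eval g xs y \<and> (\<forall>v\<in>set (xs @ [y]). v < j))"

definition newf :: "(recf \<times> nat) list \<Rightarrow> nat \<Rightarrow> inst" where
  "newf SL j = (if good SL j then (case finfo j of (g, l, xs, y) \<Rightarrow> {(nm g l, xs @ [y])}) else {})"

definition rs :: "(recf \<times> nat) list \<Rightarrow> nat \<Rightarrow> inst" where
  "rs SL i = {(0, [e]) | e. e < i} \<union> (\<Union>j<i. newf SL j)"

lemma adom_newf: "adom (newf SL j) \<subseteq> {..<j}"
  by (auto simp: newf_def good_def adom_def split: prod.splits if_splits)

lemma adom_ticks: "adom {(0, [e]) | e. e < i} = {..<i}"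
  by (auto simp: adom_def)

lemma adom_UN: "adom (\<Union>j\<in>A. F j) = (\<Union>j\<in>A. adom (F j))"
  by (auto simp: adom_def)

lemma adom_rs: "adom (rs SL i) = {..<i}"
proof -
  have "adom (\<Union>j<i. newf SL j) \<subseteq> {..<i}"
    using adom_newf by (fastforce simp: adom_UN)
  then show ?thesis by (auto simp: rs_def adom_ticks)
qed

lemma rs_Suc: "rs SL (Suc i) = insert (0, [i]) (rs SL i) \<union> newf SL i"
  by (auto simp: rs_def lessThan_Suc)

lemma map_shift: "map (\<lambda>k. if k = 0 then i else zs ! (k - 1)) [1..<Suc (length zs)] = zs"
  by (rule nth_equalityI) (auto simp del: upt_Suc)

lemma rs_step: "dms_step (mkdms SL) (rs SL i, {..<i}) (rs SL (Suc i), {..<Suc i})"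
proof (cases "good SL i")
  case False
  then have nf: "newf SL i = {}" by (simp add: newf_def)
  show ?thesis unfolding dms_step_def
    by (rule bexI[of _ idle], rule exI[of _ "\<lambda>_. i"])
       (auto simp: idle_def rs_Suc nf mkdms_def)
next
  case True
  obtain g l xs y where fi: "finfo i = (g, l, xs, y)" by (cases "finfo i") auto
  with True have G: "(g, l) \<in> set SL" "length xs = l" "rf_eval g xs y" "\<forall>v\<in>set (xs @ [y]). v < i"
    by (auto simp: good_def)
  have nf: "newf SL i = {(nm g l, xs @ [y])}" using True fi by (simp add: newf_def)
  define zs where "zs = xs @ [y]"
  define \<sigma> where "\<sigma> = (\<lambda>k. if k = 0 then i else zs ! (k - 1))"
  have lz: "length zs = Suc l" using G by (simp add: zs_def)
  have ms: "map \<sigma> [1..<Suc (Suc l)] = zs" using map_shift[of i zs] lz by (simp add: \<sigma>_def)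
  have "(nm g l, Suc l) \<in> set (ents SL)" using G(1) by (force simp: ents_def)
  then have inact: "act_of (nm g l, Suc l) \<in> set (d_acts (mkdms SL))"
    by (simp add: mkdms_def)
  have par: "\<forall>u\<in>set [1..<Suc (Suc l)]. \<sigma> u \<in> adom (rs SL i)"
  proof
    fix u assume "u \<in> set [1..<Suc (Suc l)]"
    then have "\<sigma> u \<in> set (map \<sigma> [1..<Suc (Suc l)])" by auto
    then have "\<sigma> u \<in> set zs" using ms by (metis)
    then show "\<sigma> u \<in> adom (rs SL i)" using G(4) by (auto simp: adom_rs zs_def)
  qed
  have s0: "\<sigma> 0 = i" by (simp add: \<sigma>_def)
  show ?thesis unfolding dms_step_def
    apply (rule bexI[OF _ inact], rule exI[of _ \<sigma>])
    using par ms s0 by (auto simp: act_of_def eqconj_holds rs_Suc nf zs_def simp del: upt_Suc)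
qed

lemma rs_run: "is_run (mkdms SL) (rs SL)"
proof -
  have "rs SL 0 = init_inst (mkdms SL)" by (simp add: rs_def init_inst_def mkdms_def)
  then show ?thesis unfolding is_run_def using rs_step[of SL]
    by (intro exI[of _ "\<lambda>i. {..<i}"]) auto
qed

lemma rs_brun: "brun (rs SL) id"
  by unfold_locales (auto simp: adom_rs)

lemma rs_V: "brun.V (rs SL) id = {(R, xs). \<exists>i. (R, xs) \<in> rs SL i}"
  using rs_brun by (simp add: brun.V_def)

lemma rs_facts: "(nm g l, xs @ [y]) \<in> brun.V (rs SL) id \<Longrightarrow> length xs = l \<Longrightarrow> (g, l) \<in> set SL \<and> rf_eval g xs y"
proof -
  assume a: "(nm g l, xs @ [y]) \<in> brun.V (rs SL) id" and L: "length xs = l"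
  then obtain i where "(nm g l, xs @ [y]) \<in> rs SL i" by (auto simp: rs_V)
  then obtain j where "(nm g l, xs @ [y]) \<in> newf SL j" by (auto simp: rs_def)
  then obtain g' l' xs' y' where fi: "finfo j = (g', l', xs', y')" and gd: "good SL j"
    and eq: "(nm g l, xs @ [y]) = (nm g' l', xs' @ [y'])"
    by (auto simp: newf_def split: if_splits prod.splits)
  from eq have "g = g'" "l = l'" "xs @ [y] = xs' @ [y']" by (auto simp: nm_inj)
  then have "g = g'" "l = l'" "xs = xs'" "y = y'" by auto
  with gd fi show ?thesis by (simp add: good_def)
qed

lemma rs_complete: "(g, l) \<in> set SL \<Longrightarrow> length xs = l \<Longrightarrow> rf_eval g xs y \<Longrightarrow> (nm g l, xs @ [y]) \<in> brun.V (rs SL) id"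
proof -
  assume G: "(g, l) \<in> set SL" "length xs = l" "rf_eval g xs y"
  define k where "k = to_nat (g, l, xs, y)"
  define B where "B = Suc (Max (set (xs @ [y])))"
  define j where "j = prod_encode (k, B)"
  have fi: "finfo j = (g, l, xs, y)" by (simp add: finfo_def j_def k_def)
  have tri: "n \<le> triangle n" for n by (induction n) auto
  have "B \<le> j" using tri[of "k + B"] by (simp add: j_def prod_encode_def)
  then have "\<forall>v\<in>set (xs @ [y]). v < j" unfolding B_def
    by (metis List.finite_set Max_ge le_imp_less_Suc less_le_trans)
  then have "good SL j" using G fi by (simp add: good_def)
  then have nf: "newf SL j = {(nm g l, xs @ [y])}" using fi by (simp add: newf_def)
  have "(nm g l, xs @ [y]) \<in> rs SL (Suc j)" unfolding rs_def
    by (rule UnI2, rule UN_I[of j]) (auto simp: nf)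
  then show ?thesis by (auto simp: rs_V)
qed




lemma fv_basic[simp]:
  "mso_dfv MTrue = {}" "mso_pfv MTrue = {}" "mso_sfv MTrue = {}"
  "mso_dfv MFalse = {}" "mso_pfv MFalse = {}" "mso_sfv MFalse = {}"
  "mso_dfv (MOr a b) = mso_dfv a \<union> mso_dfv b" "mso_pfv (MOr a b) = mso_pfv a \<union> mso_pfv b"
  "mso_sfv (MOr a b) = mso_sfv a \<union> mso_sfv b"
  "mso_dfv (MImp a b) = mso_dfv a \<union> mso_dfv b" "mso_pfv (MImp a b) = mso_pfv a \<union> mso_pfv b"
  "mso_sfv (MImp a b) = mso_sfv a \<union> mso_sfv b"
  "mso_dfv (MAllG u a) = mso_dfv a - {u}" "mso_pfv (MAllG u a) = mso_pfv a" "mso_sfv (MAllG u a) = mso_sfv a"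
  "mso_dfv (InF R vs) = set vs" "mso_pfv (InF R vs) = {}" "mso_sfv (InF R vs) = {}"
  "mso_dfv (Bv u p) = {u}" "mso_pfv (Bv u p) = {p}" "mso_sfv (Bv u p) = {}"
  by (auto simp: MTrue_def MFalse_def MOr_def MImp_def MAllG_def InF_def Bv_def)

lemma fv_basic2[simp]:
  "mso_dfv (val0 u) = {u}" "mso_pfv (val0 u) = {}" "mso_sfv (val0 u) = {}"
  "mso_dfv (succv u w) = {u, w}" "mso_pfv (succv u w) = {}" "mso_sfv (succv u w) = {}"
  "mso_dfv (lessv u w) = {u, w}" "mso_pfv (lessv u w) = {}" "mso_sfv (lessv u w) = {}"
  "mso_dfv (eqv u w) = {u, w}" "mso_pfv (eqv u w) = {}" "mso_sfv (eqv u w) = {}"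
  by (auto simp: val0_def succv_def lessv_def eqv_def)

lemma fv_mconj[simp]:
  "mso_dfv (mconj as) = (\<Union>a\<in>set as. mso_dfv a)" "mso_pfv (mconj as) = (\<Union>a\<in>set as. mso_pfv a)"
  "mso_sfv (mconj as) = (\<Union>a\<in>set as. mso_sfv a)"
  by (induction as) auto

lemma fv_exGs[simp]:
  "mso_dfv (exGs vs a) = mso_dfv a - set vs" "mso_pfv (exGs vs a) = mso_pfv a" "mso_sfv (exGs vs a) = mso_sfv a"
  by (induction vs) auto

lemma fv_allGs[simp]:
  "mso_dfv (allGs vs a) = mso_dfv a - set vs" "mso_pfv (allGs vs a) = mso_pfv a" "mso_sfv (allGs vs a) = mso_sfv a"
  by (induction vs) auto

lemma fv_theta[simp]: "mso_dfv (theta k) = {0}" "mso_pfv (theta k) = {}" "mso_sfv (theta k) = {}"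
  by (induction k) auto

lemma J_pfv[simp]: "mso_pfv (J g l) = {}" and J_sfv[simp]: "mso_sfv (J g l) = {}"
  by (cases g; auto)+

lemma J_dfv: "mso_dfv (J g l) \<subseteq> insert 0 (set (xsv l))"
proof (cases g)
  case (RCn f gs)
  have "set (xsv l) \<inter> set (ysv l (length gs)) = {}" by (auto simp: xsv_set ysv_set)
  then show ?thesis using RCn by (auto simp: xsv_set ysv_set)
next
  case (RPr f g')
  have "set (tl (xsv l)) \<subseteq> set (xsv l)" by (cases "xsv l") auto
  moreover have "0 < l \<Longrightarrow> 10 \<in> set (xsv l)" by (auto simp: xsv_set)
  moreover have "1 \<notin> set (xsv l)" "2 \<notin> set (xsv l)" by (auto simp: xsv_set)
  ultimately show ?thesis using RPr by auto
next
  case (RMn f)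
  then show ?thesis by auto
qed (auto simp: xsv_set)

lemma Wf_fv[simp]: "mso_dfv (Wf SL) = {}" "mso_pfv (Wf SL) = {}" "mso_sfv (Wf SL) = {}"
  using J_dfv by (fastforce simp: Wf_def)+

lemma Af_fv: "mso_dfv (Af SL tp) \<subseteq> {0, 1}" "mso_pfv (Af SL tp) = {}" "mso_sfv (Af SL tp) = {}"
  by (auto simp: Af_def)

lemma Phi_sentence: "mso_sentence (Phi n m (Af SL tp))"
  using Af_fv[of SL tp] by (auto simp: mso_sentence_def Phi_def)

lemma over_basic[simp]:
  "mso_over Sc MTrue" "mso_over Sc MFalse"
  "mso_over Sc (MOr a b) = (mso_over Sc a \<and> mso_over Sc b)"
  "mso_over Sc (MImp a b) = (mso_over Sc a \<and> mso_over Sc b)"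
  "mso_over Sc (MAllG u a) = mso_over Sc a"
  "mso_over Sc (InF R vs) = ((R, length vs) \<in> set Sc)"
  "mso_over Sc (Bv u p)" "mso_over Sc (val0 u)" "mso_over Sc (succv u w)" "mso_over Sc (lessv u w)"
  "mso_over Sc (eqv u w)"
  by (auto simp: MTrue_def MFalse_def MOr_def MImp_def MAllG_def InF_def Bv_def val0_def succv_def
      lessv_def eqv_def)

lemma over_theta[simp]: "mso_over Sc (theta k)" by (induction k) auto
lemma over_mconj[simp]: "mso_over Sc (mconj as) = (\<forall>a\<in>set as. mso_over Sc a)" by (induction "as") auto
lemma over_exGs[simp]: "mso_over Sc (exGs vs a) = mso_over Sc a" by (induction vs) auto
lemma over_allGs[simp]: "mso_over Sc (allGs vs a) = mso_over Sc a" by (induction vs) auto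

lemma J_over: "(\<forall>(h, k)\<in>set (subs g l). (nm h k, Suc k) \<in> set Sc) \<Longrightarrow> mso_over Sc (J g l)"
proof (cases g)
  case (RCn f gs)
  assume H: "\<forall>(h, k)\<in>set (subs g l). (nm h k, Suc k) \<in> set Sc"
  have 1: "(nm (gs ! j) l, Suc l) \<in> set Sc" if "j < length gs" for j
  proof -
    have "(gs ! j, l) \<in> set (subs (gs ! j) l)" by (rule subs_self)
    then have "(gs ! j, l) \<in> set (subs g l)" using RCn that by (auto dest!: nth_mem[of j gs])
    then show ?thesis using H by auto
  qed
  have 2: "(nm f (length gs), Suc (length gs)) \<in> set Sc" using H RCn subs_self[of f "length gs"] by auto
  show ?thesis using RCn 1 2 by simp
next
  case (RPr f g')
  assume H: "\<forall>(h, k)\<in>set (subs g l). (nm h k, Suc k) \<in> set Sc"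
  have 1: "(nm f (l - 1), Suc (l - 1)) \<in> set Sc" using H RPr subs_self[of f "l - 1"] by auto
  have 2: "(nm (RPr f g') l, Suc l) \<in> set Sc" using H RPr by auto
  have 3: "(nm g' (Suc l), Suc (Suc l)) \<in> set Sc" using H RPr subs_self[of g' "Suc l"] by auto
  show ?thesis using RPr 1 2 3 by auto
next
  case (RMn f)
  assume H: "\<forall>(h, k)\<in>set (subs g l). (nm h k, Suc k) \<in> set Sc"
  have 1: "(nm f (Suc l), Suc (Suc l)) \<in> set Sc" using H RMn subs_self[of f "Suc l"] by auto
  show ?thesis using RMn 1 by auto
qed auto

lemma Wf_over:
  assumes "\<forall>(g, l)\<in>set SL. \<forall>(h, k)\<in>set (subs g l). (nm h k, Suc k) \<in> set Sc"
  shows "mso_over Sc (Wf SL)"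
proof -
  have "mso_over Sc (J g l)" "(nm g l, Suc l) \<in> set Sc" if "(g, l) \<in> set SL" for g l
    using J_over assms that subs_self[of g l] by blast+
  then show ?thesis by (auto simp: Wf_def)
qed




definition "es = enc_mso (succv 1 0)"
definition "ee = enc_mso (eqv 0 1)"
definition "t0 = enc_mso (theta 0)"

definition Fenc :: "nat \<Rightarrow> nat" where
  "Fenc e = prod_encode (7, prod_encode (1, prod_encode (4, prod_encode (es,
     prod_encode (7, prod_encode (0, prod_encode (4, prod_encode (ee, e))))))))"

lemma enc_theta: "enc_mso (theta k) = (Fenc ^^ k) t0"
  by (induction k) (auto simp: Fenc_def es_def ee_def t0_def)

definition "Fterm = pet (cst 7) (pet (cst 1) (pet (cst 4) (pet (cst es) (pet (cst 7) (pet (cst 0)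
   (pet (cst 4) (pet (cst ee) (RId 0))))))))"

lemma rf_F: "rf_eval Fterm [e] (Fenc e)"
  unfolding Fterm_def Fenc_def by (intro rf_pet rf_cst rf_id0)

definition "Tt = RPr (cst t0) (RCn Fterm [RId 0])"

lemma rf_T: "rf_eval Tt [k] (enc_mso (theta k))"
proof (induction k)
  case 0 then show ?case unfolding Tt_def enc_theta using rf_eval.pr0[OF rf_cst[of t0 "[]"]] by simp
next
  case (Suc k)
  have "rf_eval (RCn Fterm [RId 0]) [enc_mso (theta k), k] (Fenc (enc_mso (theta k)))"
    by (rule rf_cn1[OF rf_id0 rf_F])
  then have "rf_eval Tt [Suc k] (Fenc (enc_mso (theta k)))"
    using Suc unfolding Tt_def by (auto intro: rf_eval.prS)
  then show ?case by (simp only: enc_theta funpow.simps o_apply)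
qed

definition Gval :: "nat \<Rightarrow> nat \<Rightarrow> nat" where
  "Gval n m = prod_encode (m, prod_encode (3, prod_encode (7, prod_encode (0, prod_encode (4,
     prod_encode (enc_mso (theta n), prod_encode (7, prod_encode (1, prod_encode (4,
     prod_encode (prod_encode (7, prod_encode (0, prod_encode (4, prod_encode (ee, enc_mso (theta m))))), n))))))))))"

definition "Gt = pet (RId 1) (pet (cst 3) (pet (cst 7) (pet (cst 0) (pet (cst 4) (pet (RCn Tt [RId 0])
   (pet (cst 7) (pet (cst 1) (pet (cst 4) (pet (pet (cst 7) (pet (cst 0) (pet (cst 4) (pet (cst ee)
   (RCn Tt [RId 1]))))) (RId 0))))))))))"

lemma rf_G: "rf_eval Gt [n, m] (Gval n m)"
proof -
  have a: "rf_eval (RCn Tt [RId 0]) [n, m] (enc_mso (theta n))" by (rule rf_cn1[OF rf_id0 rf_T])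
  have b: "rf_eval (RCn Tt [RId 1]) [n, m] (enc_mso (theta m))" by (rule rf_cn1[OF rf_id1 rf_T])
  show ?thesis unfolding Gt_def Gval_def
    by (intro rf_pet rf_cst rf_id0 rf_id1 a b)
qed

lemma WsemI: "(\<And>g l xs y. (g, l) \<in> S \<Longrightarrow> length xs = l \<Longrightarrow> (nm g l, xs @ [y]) \<in> V \<Longrightarrow> Jsem V g l xs y) \<Longrightarrow> Wsem V S"
  unfolding Wsem_def by blast

lemma enc_Phi: "enc_input (D, Phi (enc_mso A) (enc_dms D) A) = Gval (enc_mso A) (enc_dms D)"
  by (simp add: enc_input_def Phi_def Gval_def ee_def)

theorem theorem4p1:
  shows "\<not> decidable_on mc_input mc_yes enc_input"
proof
  assume "decidable_on mc_input mc_yes enc_input"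
  then obtain r where r: "\<And>x. mc_input x \<Longrightarrow> rf_eval r [enc_input x] (if mc_yes x then 1 else 0)"
    unfolding decidable_on_def by blast
  define tp where "tp = RCn r [Gt]"
  define SL where "SL = subs tp 2"
  define A where "A = Af SL tp"
  define D where "D = mkdms SL"
  define K where "K = enc_mso A"
  define M where "M = enc_dms D"
  define S where "S = (D, Phi K M A)"
  have encS: "enc_input S = Gval K M" by (simp add: S_def enc_Phi K_def M_def)
  have tpS: "(tp, 2) \<in> set SL" by (simp add: SL_def subs_self)
  have closed: "\<forall>(g, l)\<in>set SL. set (subs g l) \<subseteq> set SL"
    unfolding SL_def using subs_trans by blast
  have inS: "mc_input S"
  proof -
    have "\<forall>(g, l)\<in>set SL. \<forall>(h, k)\<in>set (subs g l). (nm h k, Suc k) \<in> set (d_schema D)"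
    proof (intro ballI, clarify)
      fix g l h k assume "(g, l) \<in> set SL" "(h, k) \<in> set (subs g l)"
      with closed have "(h, k) \<in> set SL" by blast
      then show "(nm h k, Suc k) \<in> set (d_schema D)" by (force simp: D_def mkdms_def ents_def)
    qed
    then have "mso_over (d_schema D) (Wf SL)" by (rule Wf_over)
    moreover have "(nm tp 2, 3) \<in> set (d_schema D)" using tpS by (force simp: D_def mkdms_def ents_def)
    ultimately have "mso_over (d_schema D) (Phi K M A)"
      by (simp add: Phi_def A_def Af_def numeral_3_eq_3)
    then show ?thesis
      by (simp add: mc_input_def S_def D_def wf_mkdms A_def Phi_sentence)
  qed
  have key: "mc_yes S \<longleftrightarrow> \<not> rf_eval tp [K, M] 1"
  proof
    assume y: "mc_yes S"
    interpret B: brun "rs SL" id by (rule rs_brun)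
    have W: "Wsem B.V (set SL)"
    proof (rule WsemI)
      fix g l xs y assume gl: "(g, l) \<in> set SL" and L: "length xs = l" and v: "(nm g l, xs @ [y]) \<in> B.V"
      from rs_facts[OF v L] have "rf_eval g xs y" by blast
      then have "Jsem (Vstar (set SL)) g l xs y" using closed gl L by (intro jsem_true) auto
      moreover have "Vstar (set SL) \<subseteq> B.V"
        by (auto simp: Vstar_def intro!: rs_complete)
      ultimately show "Jsem B.V g l xs y" by (blast intro: jsem_mono)
    qed
    from y have "mso_holds (rs SL) (\<lambda>_. 0) (\<lambda>_. 0) (\<lambda>_. {}) (Phi K M A)"
      using rs_run by (simp add: mc_yes_def S_def D_def)
    moreover have "(\<lambda>_. 0::nat) = id \<circ> (\<lambda>_. 0)" by auto
    ultimately have "mso_holds (rs SL) (id \<circ> (\<lambda>_. 0)) (\<lambda>_. 0) (\<lambda>_. {}) (Phi K M A)" by simp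
    then have "\<not> (Wsem B.V (set SL) \<and> (nm tp 2, [K, M, 1]) \<in> B.V)"
      by (simp only: A_def B.sem_Phi) simp
    with W have nin: "(nm tp 2, [K, M] @ [1]) \<notin> B.V" by simp
    show "\<not> rf_eval tp [K, M] 1"
    proof
      assume "rf_eval tp [K, M] 1"
      from rs_complete[OF tpS _ this] nin show False by simp
    qed
  next
    assume n: "\<not> rf_eval tp [K, M] 1"
    show "mc_yes S"
      unfolding mc_yes_def
    proof (intro allI impI)
      fix \<rho> assume "is_run (fst S) \<rho>"
      then obtain c where "brun \<rho> c" using run_brun by (auto simp: S_def D_def)
      then interpret B: brun \<rho> c .
      have "\<not> (Wsem B.V (set SL) \<and> (nm tp 2, [K, M, 1]) \<in> B.V)"
      proof
        assume h: "Wsem B.V (set SL) \<and> (nm tp 2, [K, M, 1]) \<in> B.V"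
        have "rf_eval tp [K, M] 1"
          by (rule soundness[of B.V "set SL" tp 2]) (use h in \<open>auto simp: SL_def\<close>)
        with n show False by simp
      qed
      then have "mso_holds \<rho> (c \<circ> (\<lambda>_. 0)) (\<lambda>_. 0) (\<lambda>_. {}) (Phi K M A)"
        by (simp only: A_def B.sem_Phi) simp
      moreover have "mso_dfv (Phi K M A) = {}"
        using Phi_sentence[of K M SL tp] by (simp add: A_def mso_sentence_def)
      ultimately show "mso_holds \<rho> (\<lambda>_. 0) (\<lambda>_. 0) (\<lambda>_. {}) (snd S)"
        using mso_coinc[of "Phi K M A" "\<lambda>_. 0" "c \<circ> (\<lambda>_. 0)" \<rho>] by (simp add: S_def)
    qed
  qed
  have eqv1: "rf_eval tp [K, M] 1 \<longleftrightarrow> rf_eval r [Gval K M] 1"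
  proof
    assume "rf_eval tp [K, M] 1"
    then obtain ys where "list_all2 (\<lambda>g y. rf_eval g [K, M] y) [Gt] ys" "rf_eval r ys 1"
      unfolding tp_def by (auto elim: RCnE)
    then obtain v where "ys = [v]" "rf_eval Gt [K, M] v" "rf_eval r [v] 1"
      by (auto simp: list_all2_Cons1)
    with rf_G rf_det show "rf_eval r [Gval K M] 1" by metis
  next
    assume "rf_eval r [Gval K M] 1"
    then show "rf_eval tp [K, M] 1" unfolding tp_def by (rule rf_cn1[OF rf_G])
  qed
  show False
  proof (cases "mc_yes S")
    case True
    with r[OF inS] have "rf_eval r [Gval K M] 1" by (simp add: encS)
    with eqv1 key True show False by simp
  next
    case False
    with r[OF inS] have 0: "rf_eval r [Gval K M] 0" by (simp add: encS)
    from False key eqv1 have "rf_eval r [Gval K M] 1" by simp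
    with 0 rf_det show False by fastforce
  qed
qed



end
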